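(* Let $\mathsf{MRK}$ be the axiom scheme $\neg\forall\alpha\mathsf{P}\to\exists\alpha\mathsf{P}^\bot$ for atomic $\mathsf{P}$. (1) Every instance of $\mathsf{MRK}$ is provable in $\mathsf{HA}+\mathsf{EM}^-$. (2) Conversely, the rule $\mathsf{EM}^-$ is derivable in $\mathsf{HA}+\mathsf{MRK}$: for every formula $A$ and atomic $\mathsf{P}$, if $\Gamma,A\vdash\exists\alpha\mathsf{P}$ and $\Gamma,\neg A\vdash\exists\alpha\mathsf{P}$ in $\mathsf{HA}+\mathsf{MRK}$, then $\Gamma\vdash\exists\alpha\mathsf{P}$ in $\mathsf{HA}+\mathsf{MRK}$.
   Context: $\mathsf{HA}$ is intuitionistic first-order arithmetic (Heyting arithmetic, in natural deduction) over $0,\mathsf{S},+,\cdot,=$ with the Peano axioms and induction scheme; atomic formulas are decidable and $\mathsf{P}^\bot$ denotes the complementary atomic predicate of $\mathsf{P}$ (so $\mathsf{P}^\bot\equiv\neg\mathsf{P}$). $\mathsf{HA}+\mathsf{EM}^-$ is $\mathsf{HA}$ extended with the rule $\mathsf{EM}^-$: for an arbitrary formula $A$ and atomic $\mathsf{P}$, from $\Gamma,A\vdash\exists x\mathsf{P}$ and $\Gamma,\neg A\vdash\exists x\mathsf{P}$ infer $\Gamma\vdash\exists x\mathsf{P}$ (discharging $A$ and $\neg A$). $\mathsf{HA}+\mathsf{MRK}$ is $\mathsf{HA}$ with the instances of $\mathsf{MRK}$ as additional axioms. *)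

theory Defs
  imports Main
begin

datatype trm = Var nat | Zero | Succ trm | Plus trm trm | Times trm trm

text \<open>Atomic formulas: equations and their complements (the complementary
  atomic predicate P-bot of an atomic P; decidable atoms).\<close>
datatype fm =
    Eq trm trm
  | Neq trm trm
  | Bot
  | Conj fm fm
  | Disj fm fm
  | Imp fm fm
  | All fm
  | Ex fm

definition Neg :: "fm \<Rightarrow> fm" where "Neg A = Imp A Bot"

fun atomic :: "fm \<Rightarrow> bool" where
  "atomic (Eq t s) = True"
| "atomic (Neq t s) = True"
| "atomic _ = False"

fun comp :: "fm \<Rightarrow> fm" where
  "comp (Eq t s) = Neq t s"
| "comp (Neq t s) = Eq t s"
| "comp A = A"

fun substt :: "(nat \<Rightarrow> trm) \<Rightarrow> trm \<Rightarrow> trm" where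
  "substt \<sigma> (Var n) = \<sigma> n"
| "substt \<sigma> Zero = Zero"
| "substt \<sigma> (Succ t) = Succ (substt \<sigma> t)"
| "substt \<sigma> (Plus t u) = Plus (substt \<sigma> t) (substt \<sigma> u)"
| "substt \<sigma> (Times t u) = Times (substt \<sigma> t) (substt \<sigma> u)"

definition liftt :: "trm \<Rightarrow> trm" where "liftt t = substt (\<lambda>n. Var (Suc n)) t"

definition up :: "(nat \<Rightarrow> trm) \<Rightarrow> nat \<Rightarrow> trm" where
  "up \<sigma> n = (case n of 0 \<Rightarrow> Var 0 | Suc m \<Rightarrow> liftt (\<sigma> m))"

fun substf :: "(nat \<Rightarrow> trm) \<Rightarrow> fm \<Rightarrow> fm" where
  "substf \<sigma> (Eq t u) = Eq (substt \<sigma> t) (substt \<sigma> u)"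
| "substf \<sigma> (Neq t u) = Neq (substt \<sigma> t) (substt \<sigma> u)"
| "substf \<sigma> Bot = Bot"
| "substf \<sigma> (Conj A B) = Conj (substf \<sigma> A) (substf \<sigma> B)"
| "substf \<sigma> (Disj A B) = Disj (substf \<sigma> A) (substf \<sigma> B)"
| "substf \<sigma> (Imp A B) = Imp (substf \<sigma> A) (substf \<sigma> B)"
| "substf \<sigma> (All A) = All (substf (up \<sigma>) A)"
| "substf \<sigma> (Ex A) = Ex (substf (up \<sigma>) A)"

definition inst :: "fm \<Rightarrow> trm \<Rightarrow> fm" where
  "inst A t = substf (\<lambda>n. if n = 0 then t else Var (n - 1)) A"

definition lift :: "fm \<Rightarrow> fm" where
  "lift A = substf (\<lambda>n. Var (Suc n)) A"

text \<open>A[S x / x], where x is variable 0, staying under the same binder.\<close>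
definition succ_inst :: "fm \<Rightarrow> fm" where
  "succ_inst A = substf (\<lambda>n. if n = 0 then Succ (Var 0) else Var n) A"

inductive_set HA_axioms :: "fm set" where
  eq_refl: "Eq t t \<in> HA_axioms"
| eq_subst: "Imp (Eq t s) (Imp (inst A t) (inst A s)) \<in> HA_axioms"
| neq_1: "Imp (Neq t s) (Neg (Eq t s)) \<in> HA_axioms"
| neq_2: "Imp (Neg (Eq t s)) (Neq t s) \<in> HA_axioms"
| succ_nz: "Neg (Eq (Succ t) Zero) \<in> HA_axioms"
| succ_inj: "Imp (Eq (Succ t) (Succ s)) (Eq t s) \<in> HA_axioms"
| plus_0: "Eq (Plus t Zero) t \<in> HA_axioms"
| plus_S: "Eq (Plus t (Succ s)) (Succ (Plus t s)) \<in> HA_axioms"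
| times_0: "Eq (Times t Zero) Zero \<in> HA_axioms"
| times_S: "Eq (Times t (Succ s)) (Plus (Times t s) t) \<in> HA_axioms"
| ind_scheme: "Imp (inst A Zero) (Imp (All (Imp A (succ_inst A))) (All A)) \<in> HA_axioms"

inductive deriv :: "fm set \<Rightarrow> bool \<Rightarrow> fm list \<Rightarrow> fm \<Rightarrow> bool" for Ax :: "fm set" and em :: bool where
  Assm: "A \<in> set \<Gamma> \<Longrightarrow> deriv Ax em \<Gamma> A"
| HAAx: "A \<in> HA_axioms \<Longrightarrow> deriv Ax em \<Gamma> A"
| ExtraAx: "A \<in> Ax \<Longrightarrow> deriv Ax em \<Gamma> A"
| BotE: "deriv Ax em \<Gamma> Bot \<Longrightarrow> deriv Ax em \<Gamma> A"
| ImpI: "deriv Ax em (A # \<Gamma>) B \<Longrightarrow> deriv Ax em \<Gamma> (Imp A B)"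
| ImpE: "deriv Ax em \<Gamma> (Imp A B) \<Longrightarrow> deriv Ax em \<Gamma> A \<Longrightarrow> deriv Ax em \<Gamma> B"
| ConjI: "deriv Ax em \<Gamma> A \<Longrightarrow> deriv Ax em \<Gamma> B \<Longrightarrow> deriv Ax em \<Gamma> (Conj A B)"
| ConjE1: "deriv Ax em \<Gamma> (Conj A B) \<Longrightarrow> deriv Ax em \<Gamma> A"
| ConjE2: "deriv Ax em \<Gamma> (Conj A B) \<Longrightarrow> deriv Ax em \<Gamma> B"
| DisjI1: "deriv Ax em \<Gamma> A \<Longrightarrow> deriv Ax em \<Gamma> (Disj A B)"
| DisjI2: "deriv Ax em \<Gamma> B \<Longrightarrow> deriv Ax em \<Gamma> (Disj A B)"
| DisjE: "deriv Ax em \<Gamma> (Disj A B) \<Longrightarrow> deriv Ax em (A # \<Gamma>) C \<Longrightarrow> deriv Ax em (B # \<Gamma>) C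
          \<Longrightarrow> deriv Ax em \<Gamma> C"
| AllI: "deriv Ax em (map lift \<Gamma>) A \<Longrightarrow> deriv Ax em \<Gamma> (All A)"
| AllE: "deriv Ax em \<Gamma> (All A) \<Longrightarrow> deriv Ax em \<Gamma> (inst A t)"
| ExI: "deriv Ax em \<Gamma> (inst A t) \<Longrightarrow> deriv Ax em \<Gamma> (Ex A)"
| ExE: "deriv Ax em \<Gamma> (Ex A) \<Longrightarrow> deriv Ax em (A # map lift \<Gamma>) (lift B) \<Longrightarrow> deriv Ax em \<Gamma> B"
| EMminus: "em \<Longrightarrow> atomic P \<Longrightarrow> deriv Ax em (A # \<Gamma>) (Ex P) \<Longrightarrow> deriv Ax em (Neg A # \<Gamma>) (Ex P)
          \<Longrightarrow> deriv Ax em \<Gamma> (Ex P)"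

abbreviation HA_EM :: "fm list \<Rightarrow> fm \<Rightarrow> bool" where
  "HA_EM \<equiv> deriv {} True"

definition MRK_inst :: "fm \<Rightarrow> fm" where
  "MRK_inst P = Imp (Neg (All P)) (Ex (comp P))"

definition MRK :: "fm set" where
  "MRK = {MRK_inst P | P. atomic P}"

abbreviation HA_MRK :: "fm list \<Rightarrow> fm \<Rightarrow> bool" where
  "HA_MRK \<equiv> deriv MRK False"

end

theory Submission
  imports Defs
begin

lemma substt_comp: "substt \<sigma> (substt \<tau> t) = substt (\<lambda>n. substt \<sigma> (\<tau> n)) t"
  by (induction t) auto

lemma substt_id: "substt Var t = t"
  by (induction t) auto

lemma substt_id': "(\<And>n. \<sigma> n = Var n) \<Longrightarrow> substt \<sigma> t = t"
proof -
  assume "\<And>n. \<sigma> n = Var n"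
  then have "\<sigma> = Var" by auto
  then show ?thesis by (simp add: substt_id)
qed

lemma inst_lift_t: "substt (\<lambda>n. if n = 0 then u else Var (n - 1)) (substt (\<lambda>n. Var (Suc n)) t) = t"
  by (simp add: substt_comp substt_id')

lemma inst_up_t: "substt (\<lambda>n. if n = 0 then Var 0 else Var (n - 1)) (substt (up (\<lambda>n. Var (Suc n))) t) = t"
  by (simp add: substt_comp, rule substt_id', simp add: up_def liftt_def split: nat.split)

lemma weaken: "deriv Ax em \<Gamma> A \<Longrightarrow> set \<Gamma> \<subseteq> set \<Gamma>' \<Longrightarrow> deriv Ax em \<Gamma>' A"
proof (induction arbitrary: \<Gamma>' rule: deriv.induct)
  case (Assm A \<Gamma>) then show ?case by (auto intro: deriv.Assm)
next
  case (HAAx A \<Gamma>) then show ?case by (auto intro: deriv.HAAx)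
next
  case (ExtraAx A \<Gamma>) then show ?case by (auto intro: deriv.ExtraAx)
next
  case (BotE \<Gamma> A) then show ?case by (auto intro: deriv.BotE)
next
  case (ImpI A \<Gamma> B)
  have "set (A # \<Gamma>) \<subseteq> set (A # \<Gamma>')" using ImpI.prems by auto
  then show ?case using ImpI.IH by (meson deriv.ImpI)
next
  case (ImpE \<Gamma> A B) then show ?case by (meson deriv.ImpE)
next
  case (ConjI \<Gamma> A B) then show ?case by (meson deriv.ConjI)
next
  case (ConjE1 \<Gamma> A B) then show ?case by (meson deriv.ConjE1)
next
  case (ConjE2 \<Gamma> A B) then show ?case by (meson deriv.ConjE2)
next
  case (DisjI1 \<Gamma> A B) then show ?case by (meson deriv.DisjI1)
next
  case (DisjI2 \<Gamma> B A) then show ?case by (meson deriv.DisjI2)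
next
  case (DisjE \<Gamma> A B C) then show ?case
    by (metis deriv.DisjE insert_mono list.simps(15))
next
  case (AllI \<Gamma> A) then show ?case
    by (metis deriv.AllI image_mono list.set_map)
next
  case (AllE \<Gamma> A t) then show ?case by (meson deriv.AllE)
next
  case (ExI \<Gamma> A t) then show ?case by (meson deriv.ExI)
next
  case (ExE \<Gamma> A B)
  have "set (A # map lift \<Gamma>) \<subseteq> set (A # map lift \<Gamma>')" using ExE.prems by auto
  then show ?case using ExE by (meson deriv.ExE)
next
  case (EMminus P A \<Gamma>) then show ?case
    by (metis deriv.EMminus insert_mono list.simps(15))
qed

lemma inst_lift_atomic: "atomic P \<Longrightarrow> inst (lift P) u = P"
  by (cases P) (auto simp: inst_def lift_def inst_lift_t)

lemma inst_up_atomic: "atomic P \<Longrightarrow> inst (substf (up (\<lambda>n. Var (Suc n))) P) (Var 0) = P"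
  by (cases P) (auto simp: inst_def inst_up_t)

lemma to_ex: "atomic P \<Longrightarrow> deriv Ax em \<Gamma> P \<Longrightarrow> deriv Ax em \<Gamma> (Ex (lift P))"
  by (metis deriv.ExI inst_lift_atomic)

lemma from_ex: "deriv Ax em \<Gamma> (Ex (lift P)) \<Longrightarrow> deriv Ax em \<Gamma> P"
  by (rule deriv.ExE, assumption, rule deriv.Assm, simp)

lemma lift_Imp: "lift (Imp A B) = Imp (lift A) (lift B)" by (simp add: lift_def)
lemma lift_Bot: "lift Bot = Bot" by (simp add: lift_def)
lemma lift_Ex: "lift (Ex Q) = Ex (substf (up (\<lambda>n. Var (Suc n))) Q)" by (simp add: lift_def)
lemma lift_All: "lift (All Q) = All (substf (up (\<lambda>n. Var (Suc n))) Q)" by (simp add: lift_def)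

lemma lift_atomic: "atomic P \<Longrightarrow> atomic (lift P)" by (cases P) (auto simp: lift_def)

lemma comp_atomic: "atomic P \<Longrightarrow> atomic (comp P)" by (cases P) auto
lemma comp_comp: "atomic P \<Longrightarrow> comp (comp P) = P" by (cases P) auto

lemma use_negex:
  assumes "atomic Q" "lift (Neg (Ex Q)) \<in> set \<Gamma>" "deriv Ax em \<Gamma> Q"
  shows "deriv Ax em \<Gamma> C"
proof -
  have h: "deriv Ax em \<Gamma> (Imp (Ex (substf (up (\<lambda>n. Var (Suc n))) Q)) Bot)"
    using assms(2) by (metis deriv.Assm Neg_def lift_Imp lift_Bot lift_Ex)
  have "deriv Ax em \<Gamma> (Ex (substf (up (\<lambda>n. Var (Suc n))) Q))"
    by (rule deriv.ExI[where t="Var 0"], simp add: inst_up_atomic assms)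
  then show ?thesis using h by (meson deriv.ImpE deriv.BotE)
qed

lemma part1: "atomic P \<Longrightarrow> HA_EM [] (MRK_inst P)"
proof -
  assume at: "atomic P"
  obtain t s where ts: "P = Eq t s \<or> P = Neq t s" using at by (cases P) auto
  define ctx where "ctx = [Neg (Ex (comp P)), Neg (All P)]"
  define ctx' where "ctx' = map lift ctx"
  have hyp: "lift (Neg (Ex (comp P))) \<in> set ctx'" by (simp add: ctx'_def ctx_def)
  have atc: "atomic (comp P)" using at comp_atomic by auto
  have c1: "HA_EM (Eq t s # ctx') (Ex (lift P))"
  proof (cases "P = Eq t s")
    case True then show ?thesis using at by (metis deriv.Assm list.set_intros(1) to_ex)
  next
    case False
    then have "comp P = Eq t s" using ts by auto
    then show ?thesis using use_negex[OF atc, of "Eq t s # ctx'"] hyp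
      by (metis deriv.Assm list.set_intros(1) list.set_intros(2))
  qed
  have c2: "HA_EM (Neg (Eq t s) # ctx') (Ex (lift P))"
  proof -
    have n: "HA_EM (Neg (Eq t s) # ctx') (Neq t s)"
      by (meson deriv.Assm deriv.HAAx deriv.ImpE HA_axioms.neq_2 list.set_intros(1))
    show ?thesis
    proof (cases "P = Neq t s")
      case True then show ?thesis using at n to_ex by metis
    next
      case False
      then have "comp P = Neq t s" using ts by auto
      then show ?thesis using use_negex[OF atc, of "Neg (Eq t s) # ctx'"] hyp n by auto
    qed
  qed
  have "HA_EM ctx' (Ex (lift P))"
    by (rule deriv.EMminus[OF _ _ c1 c2]) (simp_all add: at lift_atomic)
  then have "HA_EM ctx' P" by (rule from_ex)
  then have "HA_EM ctx (All P)" unfolding ctx'_def by (rule deriv.AllI)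
  then have "HA_EM ctx Bot"
    by (rule deriv.ImpE[rotated]) (simp add: ctx_def Neg_def deriv.Assm)
  then have b2: "HA_EM ctx (Ex (comp P))" by (rule deriv.BotE)
  have b1: "HA_EM (Ex (comp P) # [Neg (All P)]) (Ex (comp P))" by (simp add: deriv.Assm)
  have "HA_EM [Neg (All P)] (Ex (comp P))"
    by (rule deriv.EMminus[OF _ atc b1]) (use b2 in \<open>simp_all add: ctx_def\<close>)
  then show ?thesis unfolding MRK_inst_def by (rule deriv.ImpI)
qed

lemma part2:
  assumes at: "atomic P" and d1: "HA_MRK (A # \<Gamma>) (Ex P)" and d2: "HA_MRK (Neg A # \<Gamma>) (Ex P)"
  shows "HA_MRK \<Gamma> (Ex P)"
proof -
  define Q where "Q = comp P"
  have atq: "atomic Q" using at comp_atomic Q_def by auto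
  obtain t s where ts: "P = Eq t s \<or> P = Neq t s" using at by (cases P) auto
  define \<Gamma>2 where "\<Gamma>2 = All Q # \<Gamma>"
  have D1: "HA_MRK \<Gamma> (Imp A (Ex P))" using d1 by (rule deriv.ImpI)
  have D2: "HA_MRK \<Gamma> (Imp (Neg A) (Ex P))" using d2 by (rule deriv.ImpI)
  have L: "HA_MRK \<Gamma>2 (Neg (Ex P))"
    unfolding Neg_def
  proof (rule deriv.ImpI, rule deriv.ExE[where A=P])
    show "HA_MRK (Ex P # \<Gamma>2) (Ex P)" by (simp add: deriv.Assm)
    let ?c = "P # map lift (Ex P # \<Gamma>2)"
    have "lift (All Q) \<in> set ?c" by (simp add: \<Gamma>2_def)
    then have "HA_MRK ?c (All (substf (up (\<lambda>n. Var (Suc n))) Q))"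
      by (metis deriv.Assm lift_All)
    then have hq: "HA_MRK ?c Q" by (metis deriv.AllE inst_up_atomic atq)
    have hp: "HA_MRK ?c P" by (simp add: deriv.Assm)
    have "HA_MRK ?c Bot"
    proof (cases "P = Eq t s")
      case True
      then have "Q = Neq t s" by (simp add: Q_def)
      then show ?thesis using hq hp True
        by (metis deriv.HAAx deriv.ImpE HA_axioms.neq_1 Neg_def)
    next
      case False
      then have "P = Neq t s" "Q = Eq t s" using ts by (auto simp: Q_def)
      then show ?thesis using hq hp
        by (metis deriv.HAAx deriv.ImpE HA_axioms.neq_1 Neg_def)
    qed
    then show "HA_MRK ?c (lift Bot)" by (simp add: lift_Bot)
  qed
  have nA: "HA_MRK \<Gamma>2 (Neg A)"
    unfolding Neg_def
  proof (rule deriv.ImpI)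
    have "HA_MRK (A # \<Gamma>2) (Imp A (Ex P))" using D1 weaken by (metis \<Gamma>2_def set_subset_Cons subset_trans)
    then have "HA_MRK (A # \<Gamma>2) (Ex P)" by (meson deriv.Assm deriv.ImpE list.set_intros(1))
    moreover have "HA_MRK (A # \<Gamma>2) (Neg (Ex P))" using L weaken by (metis set_subset_Cons)
    ultimately show "HA_MRK (A # \<Gamma>2) Bot" by (metis deriv.ImpE Neg_def)
  qed
  have "HA_MRK \<Gamma>2 (Imp (Neg A) (Ex P))" using D2 weaken by (metis \<Gamma>2_def set_subset_Cons)
  then have "HA_MRK \<Gamma>2 (Ex P)" using nA by (rule deriv.ImpE)
  then have "HA_MRK \<Gamma>2 Bot" using L by (metis deriv.ImpE Neg_def)
  then have nall: "HA_MRK \<Gamma> (Neg (All Q))" unfolding Neg_def \<Gamma>2_def by (rule deriv.ImpI)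
  have "MRK_inst Q \<in> MRK" using atq by (auto simp: MRK_def)
  then have "HA_MRK \<Gamma> (MRK_inst Q)" by (rule deriv.ExtraAx)
  then have "HA_MRK \<Gamma> (Ex (comp Q))" using nall unfolding MRK_inst_def by (rule deriv.ImpE)
  then show ?thesis using comp_comp at Q_def by simp
qed

theorem mainTheorem7:
  shows "(\<forall>P. atomic P \<longrightarrow> HA_EM [] (MRK_inst P))
       \<and> (\<forall>\<Gamma> A P. atomic P \<longrightarrow> HA_MRK (A # \<Gamma>) (Ex P) \<longrightarrow> HA_MRK (Neg A # \<Gamma>) (Ex P)
             \<longrightarrow> HA_MRK \<Gamma> (Ex P))"
  using part1 part2 by blast

end
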